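(* Let $\tau\in(0,1]$ and suppose $k\,\alpha^{(2-\tau)d}\ge 2$. Let $u,v\in V$ be distinct with $|\Gamma(u)\cap\Gamma(v)|\ge\tau d$. Then, under the Fast-Filter model described in the context, the expected number of indices $i\in[k]$ with $u\in S_i$ and $v\in S_i$ is at least $2$.
   Context: Let $G=(U,V,E)$ be a bipartite graph with $|U|=M$ and $|V|=N$. For $v\in V$ let $\Gamma(v)\subseteq U$ be its set of neighbours, and assume $|\Gamma(v)|=d\ge 1$ for every $v\in V$. Let $k=2^{m}$ and $\alpha=2^{-r}$, where $m,r$ are positive integers. Identify $[k]=\{1,\dots,k\}$ bijectively with the vector space $\mathrm{GF}(2)^m$ (for instance via the binary representation of $i-1$). Fast-Filter model: for each $u\in U$, independently draw a uniformly random matrix $A'_u\in\mathrm{GF}(2)^{r\times m}$ and a uniformly random vector $b'_u\in\mathrm{GF}(2)^{r}$; all of these are mutually independent. For $v\in V$, let $A^v$ be the $(dr)\times m$ matrix obtained by stacking the matrices $A'_u$, $u\in\Gamma(v)$, in a fixed order, and let $b^v\in\mathrm{GF}(2)^{dr}$ be obtained by stacking the $b'_u$, $u\in\Gamma(v)$, in the same order. For $i\in[k]$ (viewed as a vector in $\mathrm{GF}(2)^m$), the survival set is $S_i=\{v\in V: A^v i+b^v=0\}$, with arithmetic over $\mathrm{GF}(2)$. *)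

theory Defs
  imports "HOL-Probability.Probability" "HOL-Library.Z2"
begin

text \<open>An outcome of the Fast-Filter randomness is a pair (A, b) where A u is the r x m
  matrix A'_u (entry (j,l), j < r, l < m) and b u is the vector b'_u (entry j < r).
  Entries outside the relevant ranges (or for nodes outside U) are fixed to 0, so the
  uniform distribution on the resulting finite set is exactly the product of
  independent uniform choices of all A'_u, b'_u.\<close>

definition ff_space :: "'u set \<Rightarrow> nat \<Rightarrow> nat \<Rightarrow>
    (('u \<Rightarrow> nat \<Rightarrow> nat \<Rightarrow> bit) \<times> ('u \<Rightarrow> nat \<Rightarrow> bit)) set" where
  "ff_space U r m = {(A, b).
     (\<forall>u j l. (u \<notin> U \<or> r \<le> j \<or> m \<le> l) \<longrightarrow> A u j l = 0) \<and>
     (\<forall>u j. (u \<notin> U \<or> r \<le> j) \<longrightarrow> b u j = 0)}"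

definition ff_pmf :: "'u set \<Rightarrow> nat \<Rightarrow> nat \<Rightarrow>
    (('u \<Rightarrow> nat \<Rightarrow> nat \<Rightarrow> bit) \<times> ('u \<Rightarrow> nat \<Rightarrow> bit)) pmf" where
  "ff_pmf U r m = pmf_of_set (ff_space U r m)"

text \<open>Index i in [k] = {1..2^m} viewed as a vector of GF(2)^m: binary representation
  of i - 1 (component l = bit l).\<close>
definition idx_vec :: "nat \<Rightarrow> nat \<Rightarrow> bit" where
  "idx_vec i l = (if odd ((i - 1) div 2 ^ l) then 1 else 0)"

text \<open>v survives filter i iff A^v i + b^v = 0, i.e. every block A'_w i + b'_w, w in Gamma v,
  vanishes.\<close>
definition survives ::
  "('v \<Rightarrow> 'u set) \<Rightarrow> nat \<Rightarrow> nat \<Rightarrow>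
   (('u \<Rightarrow> nat \<Rightarrow> nat \<Rightarrow> bit) \<times> ('u \<Rightarrow> nat \<Rightarrow> bit)) \<Rightarrow> nat \<Rightarrow> 'v \<Rightarrow> bool" where
  "survives \<Gamma> r m \<omega> i v \<longleftrightarrow>
     (\<forall>w\<in>\<Gamma> v. \<forall>j<r. (\<Sum>l<m. fst \<omega> w j l * idx_vec i l) + snd \<omega> w j = 0)"

definition survival_set ::
  "'v set \<Rightarrow> ('v \<Rightarrow> 'u set) \<Rightarrow> nat \<Rightarrow> nat \<Rightarrow>
   (('u \<Rightarrow> nat \<Rightarrow> nat \<Rightarrow> bit) \<times> ('u \<Rightarrow> nat \<Rightarrow> bit)) \<Rightarrow> nat \<Rightarrow> 'v set" where
  "survival_set V \<Gamma> r m \<omega> i = {v \<in> V. survives \<Gamma> r m \<omega> i v}"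

end

theory Submission imports Defs begin

lemma bit_cancel: "(a::bit) + c + c = a" by (cases a rule: bit.exhaust; cases c; simp)
lemma bit_self: "(a::bit) + a = 0" by (cases a rule: bit.exhaust; simp)
declare add_bit_eq_xor[simp del] mult_bit_eq_and[simp del]
lemma bit_zero_add: "(a::bit) = 0 \<Longrightarrow> a + c = c" by simp
lemma UNIV_bit': "(UNIV :: bit set) = {0,1}"
proof (rule set_eqI)
  fix x :: bit show "x \<in> UNIV \<longleftrightarrow> x \<in> {0,1}" by (cases x rule: bit.exhaust) auto
qed
lemma finite_bit[simp]: "finite (UNIV :: bit set)" by (simp add: UNIV_bit')
lemma card_bit: "card (UNIV :: bit set) = 2" by (simp add: UNIV_bit')

lemma ff_space_finite:
  assumes "finite U"
  shows "finite (ff_space U r m)"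
proof -
  let ?D = "U \<times> {..<r} \<times> {..<m}" and ?D2 = "U \<times> {..<r}"
  let ?f = "\<lambda>(f, g). ((\<lambda>u j l. if (u,j,l) \<in> ?D then f (u,j,l) else (0::bit)),
                       (\<lambda>u j. if (u,j) \<in> ?D2 then g (u,j) else (0::bit)))"
  have "ff_space U r m \<subseteq> ?f ` ((?D \<rightarrow>\<^sub>E (UNIV::bit set)) \<times> (?D2 \<rightarrow>\<^sub>E (UNIV::bit set)))"
  proof
    fix x assume x: "x \<in> ff_space U r m"
    obtain A b where xab: "x = (A, b)" by fastforce
    let ?p = "(restrict (\<lambda>(u,j,l). A u j l) ?D, restrict (\<lambda>(u,j). b u j) ?D2)"
    have xs: "(\<forall>u j l. (u \<notin> U \<or> r \<le> j \<or> m \<le> l) \<longrightarrow> A u j l = 0)"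
       "(\<forall>u j. (u \<notin> U \<or> r \<le> j) \<longrightarrow> b u j = 0)"
      using x xab unfolding ff_space_def by auto
    have e1: "(\<lambda>u j l. if (u,j,l) \<in> ?D then restrict (\<lambda>(u,j,l). A u j l) ?D (u,j,l) else (0::bit)) = A"
      using xs(1) by (intro ext) (auto simp: not_less)
    have e2: "(\<lambda>u j. if (u,j) \<in> ?D2 then restrict (\<lambda>(u,j). b u j) ?D2 (u,j) else (0::bit)) = b"
      using xs(2) by (intro ext) (auto simp: not_less)
    have h1: "?f ?p = (A, b)" by (simp only: prod.case e1 e2)
    have h2: "?p \<in> (?D \<rightarrow>\<^sub>E (UNIV::bit set)) \<times> (?D2 \<rightarrow>\<^sub>E (UNIV::bit set))" by auto
    show "x \<in> ?f ` ((?D \<rightarrow>\<^sub>E (UNIV::bit set)) \<times> (?D2 \<rightarrow>\<^sub>E (UNIV::bit set)))"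
      unfolding xab by (rule image_eqI[where f="?f" and x="?p", OF h1[symmetric] h2])
  qed
  moreover have "finite ((?D \<rightarrow>\<^sub>E (UNIV::bit set)) \<times> (?D2 \<rightarrow>\<^sub>E (UNIV::bit set)))"
    using assms by (intro finite_cartesian_product finite_PiE) auto
  ultimately show ?thesis by (meson finite_imageI finite_subset)
qed

lemma ff_space_nonempty: "((\<lambda>_ _ _. 0), (\<lambda>_ _. 0)) \<in> ff_space U r m"
  by (simp add: ff_space_def)

definition ffres :: "nat \<Rightarrow> (nat \<Rightarrow> bit) \<Rightarrow> (('u \<Rightarrow> nat \<Rightarrow> nat \<Rightarrow> bit) \<times> ('u \<Rightarrow> nat \<Rightarrow> bit)) \<Rightarrow> 'u \<times> nat \<Rightarrow> bit" where
  "ffres m x \<omega> = (\<lambda>(w,j). (\<Sum>l<m. fst \<omega> w j l * x l) + snd \<omega> w j)"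

definition fftrans :: "('u \<times> nat) set \<Rightarrow> ('u \<times> nat \<Rightarrow> bit) \<Rightarrow> (('u \<Rightarrow> nat \<Rightarrow> nat \<Rightarrow> bit) \<times> ('u \<Rightarrow> nat \<Rightarrow> bit)) \<Rightarrow> (('u \<Rightarrow> nat \<Rightarrow> nat \<Rightarrow> bit) \<times> ('u \<Rightarrow> nat \<Rightarrow> bit))" where
  "fftrans C c \<omega> = (fst \<omega>, \<lambda>w j. if (w,j) \<in> C then snd \<omega> w j + c (w,j) else snd \<omega> w j)"

lemma count_event:
  assumes U: "finite U" and W: "W \<subseteq> U"
  shows "card {\<omega> \<in> ff_space U r m. \<forall>w\<in>W. \<forall>j<r. (\<Sum>l<m. fst \<omega> w j l * x l) + snd \<omega> w j = 0}
           * 2 ^ (r * card W) = card (ff_space U r m)"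
proof -
  define S where "S = ff_space U r m"
  define C where "C = W \<times> {..<r}"
  define P where "P = C \<rightarrow>\<^sub>E (UNIV :: bit set)"
  define g where "g = (\<lambda>\<omega>. restrict (ffres m x \<omega>) C)"
  define F where "F = (\<lambda>c. {\<omega> \<in> S. g \<omega> = c})"
  define c0 where "c0 = restrict (\<lambda>_. 0::bit) C"
  have finW: "finite W" using U W finite_subset by blast
  have finC: "finite C" using finW by (simp add: C_def)
  have finS: "finite S" using U ff_space_finite S_def by blast
  have cardC: "card C = r * card W" by (simp add: C_def card_cartesian_product)
  have finP: "finite P" using finC by (simp add: P_def finite_PiE)
  have cardP: "card P = 2 ^ (r * card W)"
    using finC by (simp add: P_def card_PiE card_bit cardC)
  have c0P: "c0 \<in> P" by (simp add: c0_def P_def)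
  have SU: "S = (\<Union>c\<in>P. F c)"
    by (auto simp: F_def P_def g_def)
  have "card S = (\<Sum>c\<in>P. card (F c))"
    unfolding SU
    by (rule card_UN_disjoint) (auto simp: finP F_def finS)
  also have "\<dots> = (\<Sum>c\<in>P. card (F c0))"
  proof (rule sum.cong[OF refl])
    fix c assume cP: "c \<in> P"
    have CS: "(w,j) \<in> C \<Longrightarrow> w \<in> U \<and> j < r" for w j using W by (auto simp: C_def)
    have transS: "\<omega> \<in> S \<Longrightarrow> fftrans C e \<omega> \<in> S" for e \<omega>
      using CS unfolding S_def ff_space_def fftrans_def by fastforce
    have res_trans: "p \<in> C \<Longrightarrow> ffres m x (fftrans C e \<omega>) p = ffres m x \<omega> p + e p" for e \<omega> p
      by (cases p) (simp add: ffres_def fftrans_def add.assoc)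
    have tt: "fftrans C e (fftrans C e \<omega>) = \<omega>" for e \<omega>
      by (cases \<omega>) (auto simp: fftrans_def bit_cancel intro!: ext)
    have "bij_betw (fftrans C c) (F c0) (F c)"
    proof (rule bij_betw_byWitness[where f' = "fftrans C c"])
      show "\<forall>a\<in>F c0. fftrans C c (fftrans C c a) = a" by (simp add: tt)
      show "\<forall>a\<in>F c. fftrans C c (fftrans C c a) = a" by (simp add: tt)
      show "fftrans C c ` F c0 \<subseteq> F c"
      proof
        fix y assume "y \<in> fftrans C c ` F c0"
        then obtain \<omega> where om: "\<omega> \<in> F c0" "y = fftrans C c \<omega>" by blast
        have "g y = c"
        proof (rule ext)
          fix p show "g y p = c p"
          proof (cases "p \<in> C")
            case True
            have "g \<omega> p = c0 p" using om by (simp add: F_def)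
            then have "ffres m x \<omega> p = 0" using True by (simp add: g_def c0_def)
            note r0 = this
            have "g y p = ffres m x y p" using True by (simp add: g_def)
            also have "\<dots> = ffres m x \<omega> p + c p" unfolding om(2) by (rule res_trans[OF True])
            also have "\<dots> = c p" using r0 by simp
            finally show ?thesis .
          next
            case False
            have cu: "c p = undefined" using PiE_arb[OF cP[unfolded P_def] False] .
            show ?thesis using False by (simp add: g_def cu)
          qed
        qed
        moreover have "\<omega> \<in> S" using om(1) by (simp add: F_def)
        ultimately show "y \<in> F c" using transS om(2) by (simp add: F_def)
      qed
      show "fftrans C c ` F c \<subseteq> F c0"
      proof
        fix y assume "y \<in> fftrans C c ` F c"
        then obtain \<omega> where om: "\<omega> \<in> F c" "y = fftrans C c \<omega>" by blast
        have "g y = c0"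
        proof (rule ext)
          fix p show "g y p = c0 p"
          proof (cases "p \<in> C")
            case True
            have "g \<omega> p = c p" using om by (simp add: F_def)
            then have "ffres m x \<omega> p = c p" using True by (simp add: g_def)
            note r0 = this
            have "g y p = ffres m x y p" using True by (simp add: g_def)
            also have "\<dots> = ffres m x \<omega> p + c p" unfolding om(2) by (rule res_trans[OF True])
            also have "\<dots> = c0 p" using r0 True by (simp add: bit_self c0_def)
            finally show ?thesis .
          next
            case False then show ?thesis by (auto simp: g_def c0_def)
          qed
        qed
        moreover have "\<omega> \<in> S" using om(1) by (simp add: F_def)
        ultimately show "y \<in> F c0" using transS om(2) by (simp add: F_def)
      qed
    qed
    then have "card (F c0) = card (F c)" by (rule bij_betw_same_card)
    then show "card (F c) = card (F c0)" by (rule sym)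
  qed
  also have "\<dots> = card P * card (F c0)" by simp
  finally have 1: "card S = card P * card (F c0)" .
  have Fc0: "F c0 = {\<omega> \<in> S. \<forall>w\<in>W. \<forall>j<r. (\<Sum>l<m. fst \<omega> w j l * x l) + snd \<omega> w j = 0}"
  proof -
    have A: "g \<omega> = c0 \<longleftrightarrow> (\<forall>p\<in>C. ffres m x \<omega> p = 0)" for \<omega>
    proof
      assume h: "g \<omega> = c0"
      show "\<forall>p\<in>C. ffres m x \<omega> p = 0"
      proof
        fix p assume "p \<in> C"
        moreover have "g \<omega> p = c0 p" using h by simp
        ultimately show "ffres m x \<omega> p = 0" by (simp add: g_def c0_def)
      qed
    next
      assume "\<forall>p\<in>C. ffres m x \<omega> p = 0"
      then show "g \<omega> = c0" unfolding g_def c0_def by (intro restrict_ext) simp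
    qed
    have B: "(\<forall>p\<in>C. ffres m x \<omega> p = 0) \<longleftrightarrow> (\<forall>w\<in>W. \<forall>j<r. (\<Sum>l<m. fst \<omega> w j l * x l) + snd \<omega> w j = 0)" for \<omega>
      by (auto simp: C_def ffres_def)
    have "g \<omega> = c0 \<longleftrightarrow> (\<forall>w\<in>W. \<forall>j<r. (\<Sum>l<m. fst \<omega> w j l * x l) + snd \<omega> w j = 0)" for \<omega>
      using A B by blast
    then show ?thesis unfolding F_def by blast
  qed
  show ?thesis unfolding S_def[symmetric] 1 cardP Fc0 by (rule mult.commute)
qed

lemma alpha_powr0: "(\<alpha>::real) = 1 / 2^r \<Longrightarrow> \<alpha> = 2 powr (- real r)"
  by (simp add: powr_minus_divide powr_realpow)
lemma alpha_powr1: "(\<alpha>::real) = 2 powr (- real r) \<Longrightarrow> \<alpha> powr ((2 - \<tau>) * real d) = 2 powr (- (real r * ((2 - \<tau>) * real d)))"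
  by (simp add: powr_powr)

lemma real_card_filter: "finite I \<Longrightarrow> real (card {i \<in> I. Q i}) = (\<Sum>i\<in>I. if Q i then 1 else 0)"
  by (simp add: sum.inter_filter[symmetric])

theorem lemma1:
  fixes U :: "'u set" and V :: "'v set" and \<Gamma> :: "'v \<Rightarrow> 'u set"
    and d m r k :: nat and \<alpha> \<tau> :: real and u v :: 'v
  assumes "finite U"
    and "\<forall>x\<in>V. \<Gamma> x \<subseteq> U \<and> card (\<Gamma> x) = d"
    and "d \<ge> 1"
    and "m > 0" and "r > 0"
    and "k = 2 ^ m" and "\<alpha> = 1 / 2 ^ r"
    and "0 < \<tau>" and "\<tau> \<le> 1"
    and "real k * \<alpha> powr ((2 - \<tau>) * real d) \<ge> 2"
    and "u \<in> V" and "v \<in> V" and "u \<noteq> v"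
    and "real (card (\<Gamma> u \<inter> \<Gamma> v)) \<ge> \<tau> * real d"
  shows "measure_pmf.expectation (ff_pmf U r m)
           (\<lambda>\<omega>. real (card {i \<in> {1..k}. u \<in> survival_set V \<Gamma> r m \<omega> i
                                        \<and> v \<in> survival_set V \<Gamma> r m \<omega> i})) \<ge> 2"
proof -
  note U = assms(1) and G = assms(2) and uV = assms(11) and vV = assms(12)
  define S where "S = ff_space U r m"
  define W where "W = \<Gamma> u \<union> \<Gamma> v"
  define Q where "Q = (\<lambda>i \<omega>. \<forall>w\<in>W. \<forall>j<r. (\<Sum>l<m. fst \<omega> w j l * idx_vec i l) + snd \<omega> w j = (0::bit))"
  have WU: "W \<subseteq> U" using G uV vV by (auto simp: W_def)
  have finW: "finite W" using WU U finite_subset by blast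
  have finS: "finite S" using U ff_space_finite S_def by blast
  have neS: "S \<noteq> {}" using ff_space_nonempty S_def by blast
  have cS: "card S > 0" using finS neS by (simp add: card_gt_0_iff)
  have eqQ: "(u \<in> survival_set V \<Gamma> r m \<omega> i \<and> v \<in> survival_set V \<Gamma> r m \<omega> i) = Q i \<omega>" for i \<omega>
    using uV vV unfolding survival_set_def survives_def Q_def W_def by blast
  have cnt: "real (card {\<omega> \<in> S. Q i \<omega>}) = real (card S) / 2 ^ (r * card W)" for i
  proof -
    have "card {\<omega> \<in> S. Q i \<omega>} * 2 ^ (r * card W) = card S"
      unfolding S_def Q_def by (rule count_event[OF U WU])
    then have "real (card {\<omega> \<in> S. Q i \<omega> } * 2 ^ (r * card W)) = real (card S)"
      by (rule arg_cong)
    then have h: "real (card {\<omega> \<in> S. Q i \<omega>}) * 2 ^ (r * card W) = real (card S)"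
      by (simp only: of_nat_mult of_nat_power of_nat_numeral)
    have nz: "(2::real) ^ (r * card W) \<noteq> 0" by simp
    show ?thesis using nz by (subst eq_divide_eq) (simp add: h)
  qed
  have "measure_pmf.expectation (ff_pmf U r m)
           (\<lambda>\<omega>. real (card {i \<in> {1..k}. u \<in> survival_set V \<Gamma> r m \<omega> i
                                        \<and> v \<in> survival_set V \<Gamma> r m \<omega> i}))
      = measure_pmf.expectation (pmf_of_set S) (\<lambda>\<omega>. real (card {i \<in> {1..k}. Q i \<omega>}))"
    by (simp add: eqQ ff_pmf_def S_def)
  also have "\<dots> = (\<Sum>\<omega>\<in>S. real (card {i \<in> {1..k}. Q i \<omega>})) / card S"
    by (rule integral_pmf_of_set[OF neS finS])
  also have "(\<Sum>\<omega>\<in>S. real (card {i \<in> {1..k}. Q i \<omega>})) = (\<Sum>\<omega>\<in>S. \<Sum>i\<in>{1..k}. if Q i \<omega> then 1 else 0)"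
    by (rule sum.cong[OF refl], rule real_card_filter) simp
  also have "\<dots> = (\<Sum>i\<in>{1..k}. \<Sum>\<omega>\<in>S. if Q i \<omega> then 1 else 0)"
    by (rule sum.swap)
  also have "\<dots> = (\<Sum>i\<in>{1..k}. real (card {\<omega> \<in> S. Q i \<omega>}))"
    using finS by (intro sum.cong[OF refl], rule real_card_filter[symmetric])
  also have "\<dots> = real k * (real (card S) / 2 ^ (r * card W))"
    by (simp add: cnt)
  finally have E: "measure_pmf.expectation (ff_pmf U r m)
           (\<lambda>\<omega>. real (card {i \<in> {1..k}. u \<in> survival_set V \<Gamma> r m \<omega> i
                                        \<and> v \<in> survival_set V \<Gamma> r m \<omega> i}))
       = real k / 2 ^ (r * card W)"
    using cS by simp
  have fu: "finite (\<Gamma> u)" "finite (\<Gamma> v)" using finW W_def by auto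
  have cu: "card (\<Gamma> u) = d" "card (\<Gamma> v) = d" using G uV vV by auto
  have "card W + card (\<Gamma> u \<inter> \<Gamma> v) = card (\<Gamma> u) + card (\<Gamma> v)"
    unfolding W_def using card_Un_Int[OF fu] by linarith
  then have cW: "real (card W) = 2 * real d - real (card (\<Gamma> u \<inter> \<Gamma> v))"
    using cu by linarith
  have Wle: "real (card W) \<le> (2 - \<tau>) * real d"
    using cW assms(14) by (simp add: algebra_simps)
  have a: "\<alpha> powr ((2 - \<tau>) * real d) = 2 powr (- (real r * ((2 - \<tau>) * real d)))"
    by (rule alpha_powr1[OF alpha_powr0[OF assms(7)]])
  have b0: "2 powr (real (r * card W)) = (2::real) ^ (r * card W)" by (rule powr_realpow) simp
  have b: "1 / 2 ^ (r * card W) = 2 powr (- (real r * real (card W)))"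
    using b0 by (simp add: powr_minus_divide)
  have "2 powr (- (real r * ((2 - \<tau>) * real d))) \<le> 2 powr (- (real r * real (card W)))"
    using Wle by (intro powr_mono) (auto intro!: mult_left_mono)
  then have "real k * \<alpha> powr ((2 - \<tau>) * real d) \<le> real k / 2 ^ (r * card W)"
    unfolding a using b by (simp add: divide_inverse mult_left_mono)
  with assms(10) E show ?thesis by linarith
qed

end
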